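(* Let $f:\mathbb H\to\mathbb C$ be continuous. Suppose that for every closed rectangle $R=[a,b]\times[c,d]\subset\mathbb H$ (with $0<a<b$, $c<d$) we have $$\int_{\partial R} f(r,\theta)\,e^{i\theta}\,(dr+ir\,d\theta)=0,$$ where $\partial R$ is the boundary of $R$ traversed once. Then $f$ is polar-analytic on $\mathbb H$.
   Context: $\mathbb H:=\{(r,\theta): r>0,\ \theta\in\mathbb R\}$. A function $f:\mathbb H\to\mathbb C$ is called polar-analytic on $\mathbb H$ if for every $(r_0,\theta_0)\in\mathbb H$ the limit $$(D_{\rm pol}f)(r_0,\theta_0):=\lim_{(r,\theta)\to(r_0,\theta_0)}\frac{f(r,\theta)-f(r_0,\theta_0)}{re^{i\theta}-r_0e^{i\theta_0}}$$ exists (with $re^{i\theta}\neq r_0e^{i\theta_0}$), independently of how $(r,\theta)$ approaches $(r_0,\theta_0)$ within $\mathbb H$. For a piecewise $C^1$ curve $t\mapsto(r(t),\theta(t))$, $t\in[\alpha,\beta]$, the line integral means $\int_\alpha^\beta f(r(t),\theta(t))e^{i\theta(t)}\big(r'(t)+ir(t)\theta'(t)\big)\,dt$. *)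

theory Defs
  imports "HOL-Analysis.Analysis"
begin

definition polar_H :: "(real \<times> real) set" where
  "polar_H = {p. fst p > 0}"

definition polar_pt :: "real \<times> real \<Rightarrow> complex" where
  "polar_pt p = complex_of_real (fst p) * cis (snd p)"

definition polar_analytic :: "(real \<times> real \<Rightarrow> complex) \<Rightarrow> bool" where
  "polar_analytic f \<longleftrightarrow>
     (\<forall>p0\<in>polar_H. \<exists>L. ((\<lambda>p. (f p - f p0) / (polar_pt p - polar_pt p0)) \<longlongrightarrow> L)
        (at p0 within {p\<in>polar_H. polar_pt p \<noteq> polar_pt p0}))"

definition polar_line_integral ::
  "(real \<times> real \<Rightarrow> complex) \<Rightarrow> (real \<Rightarrow> real) \<Rightarrow> (real \<Rightarrow> real) \<Rightarrow> real \<Rightarrow> real \<Rightarrow> complex" where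
  "polar_line_integral f r th \<alpha> \<beta> =
     integral {\<alpha>..\<beta>} (\<lambda>t. f (r t, th t) * cis (th t) *
        (complex_of_real (deriv r t) + \<i> * complex_of_real (r t * deriv th t)))"

definition polar_rect_boundary_integral ::
  "(real \<times> real \<Rightarrow> complex) \<Rightarrow> real \<Rightarrow> real \<Rightarrow> real \<Rightarrow> real \<Rightarrow> complex" where
  "polar_rect_boundary_integral f a b c d =
      polar_line_integral f (\<lambda>t. a + t * (b - a)) (\<lambda>t. c) 0 1
    + polar_line_integral f (\<lambda>t. b) (\<lambda>t. c + t * (d - c)) 0 1
    + polar_line_integral f (\<lambda>t. b + t * (a - b)) (\<lambda>t. d) 0 1
    + polar_line_integral f (\<lambda>t. a) (\<lambda>t. d + t * (c - d)) 0 1"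

end

theory Submission
  imports Defs "HOL-Complex_Analysis.Complex_Analysis"
begin


definition II :: "(real \<Rightarrow> complex) \<Rightarrow> real \<Rightarrow> real \<Rightarrow> complex" where
  "II \<phi> u v = contour_integral (linepath (of_real u) (of_real v)) (\<lambda>z. \<phi> (Re z))"

lemma Re_segment: "Re ` closed_segment (complex_of_real u) (of_real v) = closed_segment u v"
  by (simp add: closed_segment_of_real image_image)

lemma II_cont: "continuous_on (closed_segment u v) \<phi> \<Longrightarrow>
   continuous_on (closed_segment (complex_of_real u) (of_real v)) (\<lambda>z. \<phi> (Re z))"
  by (rule continuous_on_compose2[of "closed_segment u v" \<phi>]) (auto intro: continuous_intros simp: Re_segment[symmetric])

lemma II_integrable: "continuous_on (closed_segment u v) \<phi> \<Longrightarrow>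
   (\<lambda>z. \<phi> (Re z)) contour_integrable_on linepath (of_real u) (of_real v)"
  by (rule contour_integrable_continuous_linepath, erule II_cont)

lemma II_eq: "II \<phi> u v = integral {0..1} (\<lambda>t. \<phi> (u + t*(v-u)) * of_real (v-u))"
proof -
  have "\<And>t. Re (linepath (complex_of_real u) (of_real v) t) = u + t*(v-u)"
    by (simp add: linepath_def algebra_simps)
  then show ?thesis unfolding II_def contour_integral_integral by simp
qed

lemma II_rev: "II \<phi> v u = - II \<phi> u v"
  unfolding II_def
  by (metis contour_integral_reversepath reversepath_linepath valid_path_linepath)

lemma II_split: "continuous_on (closed_segment u v) \<phi> \<Longrightarrow> w \<in> closed_segment u v \<Longrightarrow>
   II \<phi> u v = II \<phi> u w + II \<phi> w v"
  unfolding II_def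
  by (rule contour_integral_split_linepath) (auto intro: II_cont)

lemma II_add:
  assumes "continuous_on S \<phi>" "closed_segment u v \<subseteq> S" "closed_segment v w \<subseteq> S" "closed_segment u w \<subseteq> S"
  shows "II \<phi> u v + II \<phi> v w = II \<phi> u w"
proof -
  have c: "\<And>a b. closed_segment a b \<subseteq> S \<Longrightarrow> continuous_on (closed_segment a b) \<phi>"
    using assms(1) continuous_on_subset by blast
  have "v \<in> closed_segment u w \<or> w \<in> closed_segment u v \<or> u \<in> closed_segment v w"
    unfolding closed_segment_eq_real_ivl by (cases "u \<le> v"; cases "v \<le> w"; cases "u \<le> w"; simp)
  then show ?thesis
  proof (elim disjE)
    assume 1: "v \<in> closed_segment u w" then show ?thesis using II_split[OF c[OF assms(4)] 1] by simp
  next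
    assume 2: "w \<in> closed_segment u v" then show ?thesis using II_split[OF c[OF assms(2)] 2] II_rev[of \<phi> v w] by simp
  next
    assume 3: "u \<in> closed_segment v w" then show ?thesis using II_split[OF c[OF assms(3)] 3] II_rev[of \<phi> v u] by simp
  qed
qed

lemma II_diff: "continuous_on (closed_segment u v) \<phi> \<Longrightarrow> continuous_on (closed_segment u v) \<psi> \<Longrightarrow>
  II (\<lambda>s. \<phi> s - \<psi> s) u v = II \<phi> u v - II \<psi> u v"
  unfolding II_def by (rule contour_integral_diff) (auto intro: II_integrable)

lemma II_const: "II (\<lambda>s. c) u v = c * of_real (v - u)"
  unfolding II_def by simp

lemma II_bound: "continuous_on (closed_segment u v) \<phi> \<Longrightarrow> 0 \<le> B \<Longrightarrow>
   (\<And>s. s \<in> closed_segment u v \<Longrightarrow> norm (\<phi> s) \<le> B) \<Longrightarrow> norm (II \<phi> u v) \<le> B * \<bar>v - u\<bar>"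
  unfolding II_def
  apply (rule order_trans[OF contour_integral_bound_linepath[OF II_integrable]])
     apply (auto simp: closed_segment_of_real)
  by (metis norm_of_real of_real_diff order_refl)

lemma II_cis: "II (\<lambda>t. c * cis t * k) u v = c * k * (-\<i>) * (cis v - cis u)"
proof -
  have d: "\<And>z. ((\<lambda>z. c * k * (-\<i>) * exp (\<i> * z)) has_field_derivative c * exp (\<i> * z) * k) (at z within UNIV)"
    by (auto intro!: derivative_eq_intros simp: algebra_simps)
  have "((\<lambda>z. c * exp (\<i> * z) * k) has_contour_integral
      (c * k * (-\<i>) * exp (\<i> * of_real v) - c * k * (-\<i>) * exp (\<i> * of_real u))) (linepath (of_real u) (of_real v))"
    using contour_integral_primitive[OF d, of "linepath (of_real u) (of_real v)"] by simp
  moreover have "\<And>z. z \<in> path_image (linepath (complex_of_real u) (of_real v)) \<Longrightarrow> c * exp (\<i> * z) * k = c * cis (Re z) * k"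
    by (auto simp: closed_segment_of_real cis_conv_exp)
  ultimately have "((\<lambda>z. c * cis (Re z) * k) has_contour_integral
      (c * k * (-\<i>) * exp (\<i> * of_real v) - c * k * (-\<i>) * exp (\<i> * of_real u))) (linepath (of_real u) (of_real v))"
    using has_contour_integral_eq by (metis (no_types, lifting))
  then have "II (\<lambda>t. c * cis t * k) u v = c * k * (-\<i>) * exp (\<i> * of_real v) - c * k * (-\<i>) * exp (\<i> * of_real u)"
    unfolding II_def by (rule contour_integral_unique)
  also have "\<dots> = c * k * (-\<i>) * (cis v - cis u)"
    by (simp only: cis_conv_exp[symmetric] right_diff_distrib)
  finally show ?thesis .
qed



lemma exp_lip:
  fixes a b :: real
  assumes "\<bar>a - b\<bar> \<le> 1"
  shows "\<bar>exp a - exp b\<bar> \<le> exp (b + 1) * \<bar>a - b\<bar>"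
proof -
  have 1: "exp a - exp b \<le> exp a * (a - b)"
    using exp_ge_add_one_self[of "b - a"] mult_left_mono[of "1 + (b - a)" "exp (b-a)" "exp a"]
    by (simp add: exp_diff algebra_simps)
  have 2: "exp b - exp a \<le> exp b * (b - a)"
    using exp_ge_add_one_self[of "a - b"] mult_left_mono[of "1 + (a - b)" "exp (a-b)" "exp b"]
    by (simp add: exp_diff algebra_simps)
  have ea: "exp a \<le> exp (b+1)" using assms by simp
  have eb: "exp b \<le> exp (b+1)" by simp
  show ?thesis
  proof (cases "a \<ge> b")
    case True
    have m: "exp a * (a - b) \<le> exp (b+1) * (a - b)" using ea True by (intro mult_right_mono) auto
    have "exp b \<le> exp a" using True by simp
    then have "exp a - exp b \<le> exp (b+1) * (a - b)" "\<bar>exp a - exp b\<bar> = exp a - exp b" "\<bar>a - b\<bar> = a - b"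
      using 1 True m by linarith+
    then show ?thesis by simp
  next
    case False
    have m: "exp b * (b - a) \<le> exp (b+1) * (b - a)" using eb False by (intro mult_right_mono) auto
    have "exp a \<le> exp b" using False by simp
    then have "exp b - exp a \<le> exp (b+1) * (b - a)" "\<bar>exp a - exp b\<bar> = exp b - exp a" "\<bar>a - b\<bar> = b - a"
      using 2 False m by linarith+
    then show ?thesis by simp
  qed
qed

definition PH :: "(real \<times> real \<Rightarrow> complex) \<Rightarrow> real \<Rightarrow> real \<Rightarrow> real \<Rightarrow> complex" where
  "PH f a b c = II (\<lambda>s. f (s, c) * cis c) a b"
definition PV :: "(real \<times> real \<Rightarrow> complex) \<Rightarrow> real \<Rightarrow> real \<Rightarrow> real \<Rightarrow> complex" where
  "PV f r c d = II (\<lambda>t. f (r, t) * cis t * (\<i> * of_real r)) c d"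

lemma seg_pos: "0 < a \<Longrightarrow> 0 < b \<Longrightarrow> closed_segment a b \<subseteq> {0::real<..}"
  by (auto simp: closed_segment_eq_real_ivl)

lemma contH: "continuous_on polar_H f \<Longrightarrow> continuous_on {0<..} (\<lambda>s. f (s, c) * cis c)"
proof -
  assume cont: "continuous_on polar_H f"
  have "continuous_on {0<..} (\<lambda>s. f (s, c))"
    by (rule continuous_on_compose2[OF cont, where f="\<lambda>s. (s, c)"]) (auto intro!: continuous_intros simp: polar_H_def)
  then show ?thesis by (intro continuous_on_mult continuous_on_const)
qed

lemma contV: "continuous_on polar_H f \<Longrightarrow> 0 < r \<Longrightarrow> continuous_on S (\<lambda>t. f (r, t) * cis t * (\<i> * of_real r))"
proof -
  assume cont: "continuous_on polar_H f" and r: "0 < r"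
  have "continuous_on S (\<lambda>t. f (r, t))"
    by (rule continuous_on_compose2[OF cont, where f="\<lambda>t. (r, t)"]) (use r in \<open>auto intro!: continuous_intros simp: polar_H_def\<close>)
  then show ?thesis by (intro continuous_on_mult continuous_on_const) (auto intro!: continuous_intros)
qed

lemma deriv_lin: "deriv (\<lambda>t. x + t * (y - x)) t = y - (x::real)"
  by (rule DERIV_imp_deriv) (auto intro!: derivative_eq_intros)

lemma side_h: "polar_line_integral f (\<lambda>t. a + t * (b - a)) (\<lambda>t. c) 0 1 = PH f a b c"
  unfolding polar_line_integral_def PH_def II_eq deriv_lin
  by (intro arg_cong[where f="integral {0..1}"] ext) simp

lemma side_v: "polar_line_integral f (\<lambda>t. b) (\<lambda>t. c + t * (d - c)) 0 1 = PV f b c d"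
  unfolding polar_line_integral_def PV_def II_eq deriv_lin
  by (intro arg_cong[where f="integral {0..1}"] ext) (simp add: algebra_simps)

lemma sides: "polar_rect_boundary_integral f a b c d = PH f a b c + PV f b c d + PH f b a d + PV f a d c"
  unfolding polar_rect_boundary_integral_def side_h side_v ..

lemma rect_all:
  assumes cont: "continuous_on polar_H f"
    and hyp: "\<And>a b c d. 0 < a \<Longrightarrow> a < b \<Longrightarrow> c < d \<Longrightarrow> polar_rect_boundary_integral f a b c d = 0"
    and "0 < a" "0 < b"
  shows "PH f a b c + PV f b c d + PH f b a d + PV f a d c = 0"
proof -
  have revH: "\<And>a b c. PH f b a c = - PH f a b c" unfolding PH_def by (rule II_rev)
  have revV: "\<And>r c d. PV f r d c = - PV f r c d" unfolding PV_def by (rule II_rev)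
  have H0: "\<And>a c. PH f a a c = 0" unfolding PH_def II_def by simp
  have V0: "\<And>r c. PV f r c c = 0" unfolding PV_def II_def by simp
  have basic: "\<And>a b c d. 0 < a \<Longrightarrow> a < b \<Longrightarrow> c < d \<Longrightarrow> PH f a b c + PV f b c d + PH f b a d + PV f a d c = 0"
    using hyp sides by metis
  have sym1: "PH f a b c + PV f b c d + PH f b a d + PV f a d c = 0" if "c < d" for c d
  proof -
    consider "a < b" | "a = b" | "b < a" by linarith
    then show ?thesis
    proof cases
      case 1 then show ?thesis using basic[of a b c d] \<open>0<a\<close> that by simp
    next
      case 2 show ?thesis unfolding 2 by (simp add: H0 revV[of b d c])
    next
      case 3 then have h: "PH f b a c + PV f b d c + PH f a b d + PV f a c d = 0"
        using basic[of b a c d] \<open>0<b\<close> that by (simp add: algebra_simps)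
      have "PH f a b c + PV f b c d + PH f b a d + PV f a d c = - (PH f b a c + PV f b d c + PH f a b d + PV f a c d)"
        unfolding revH[of a b c] revV[of b c d] revH[of a b d] revV[of a c d] by (simp add: algebra_simps)
      then show ?thesis using h by simp
    qed
  qed
  consider "c < d" | "c = d" | "d < c" by linarith
  then show ?thesis
  proof cases
    case 1 then show ?thesis using sym1 by simp
  next
    case 2 show ?thesis unfolding 2 by (simp add: V0 revH[of a b d])
  next
    case 3 then have h: "PH f a b d + PV f b d c + PH f b a c + PV f a c d = 0" using sym1 by simp
    have "PH f a b c + PV f b c d + PH f b a d + PV f a d c = - (PH f a b d + PV f b d c + PH f b a c + PV f a c d)"
      unfolding revH[of a b c] revV[of b c d] revH[of a b d] revV[of a c d] by (simp add: algebra_simps)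
    then show ?thesis using h by simp
  qed
qed



definition FF :: "(real \<times> real \<Rightarrow> complex) \<Rightarrow> real \<times> real \<Rightarrow> complex" where
  "FF f p = PH f 1 (fst p) 0 + PV f (fst p) 0 (snd p)"

lemma Fdiff:
  assumes cont: "continuous_on polar_H f"
    and hyp: "\<And>a b c d. 0 < a \<Longrightarrow> a < b \<Longrightarrow> c < d \<Longrightarrow> polar_rect_boundary_integral f a b c d = 0"
    and r1: "0 < r1" and r2: "0 < r2"
  shows "FF f (r2, t2) - FF f (r1, t1) = PH f r1 r2 t1 + PV f r2 t1 t2"
proof -
  have A: "PH f 1 r1 0 + PH f r1 r2 0 = PH f 1 r2 0" unfolding PH_def
    by (rule II_add[OF contH[OF cont]]) (use seg_pos r1 r2 in auto)
  have B: "PV f r2 0 t1 + PV f r2 t1 t2 = PV f r2 0 t2" unfolding PV_def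
    by (rule II_add[OF contV[OF cont r2, of UNIV]]) auto
  have R: "PH f r1 r2 0 + PV f r2 0 t1 + PH f r2 r1 t1 + PV f r1 t1 0 = 0"
    by (rule rect_all[OF cont hyp r1 r2])
  have rH: "PH f r2 r1 t1 = - PH f r1 r2 t1" unfolding PH_def by (rule II_rev)
  have rV: "PV f r1 t1 0 = - PV f r1 0 t1" unfolding PV_def by (rule II_rev)
  have R': "PH f r1 r2 0 + PV f r2 0 t1 - (PH f r1 r2 t1 + PV f r1 0 t1) = 0"
    using R unfolding rH rV by (simp add: algebra_simps)
  have "FF f (r2, t2) - FF f (r1, t1) - (PH f r1 r2 t1 + PV f r2 t1 t2)
     = PH f r1 r2 0 + PV f r2 0 t1 - (PH f r1 r2 t1 + PV f r1 0 t1)"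
    unfolding FF_def fst_conv snd_conv A[symmetric] B[symmetric] by (simp add: algebra_simps)
  then show ?thesis using R' by simp
qed

lemma Gderiv:
  assumes cont: "continuous_on polar_H f"
    and hyp: "\<And>a b c d. 0 < a \<Longrightarrow> a < b \<Longrightarrow> c < d \<Longrightarrow> polar_rect_boundary_integral f a b c d = 0"
  shows "((\<lambda>w. FF f (exp (Re w), Im w)) has_field_derivative f (exp (Re w0), Im w0) * exp w0) (at w0)"
proof -
  define r0 where "r0 = exp (Re w0)"
  define y0 where "y0 = Im w0"
  define c0 where "c0 = f (r0, y0)"
  define K where "K w = FF f (exp (Re w), Im w) - c0 * exp w" for w
  define M where "M = exp (Re w0 + 1)"
  have r0pos: "0 < r0" and Mpos: "0 < M" by (simp_all add: r0_def M_def)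
  have p0H: "(r0, y0) \<in> polar_H" using r0pos by (simp add: polar_H_def)
  have E: "K w - K w0 = II (\<lambda>s. f (s, y0) * cis y0 - c0 * cis y0) r0 (exp (Re w))
      + II (\<lambda>t. f (exp (Re w), t) * cis t * (\<i> * of_real (exp (Re w))) - c0 * cis t * (\<i> * of_real (exp (Re w)))) y0 (Im w)" for w
  proof -
    define r where "r = exp (Re w)"
    define y where "y = Im w"
    have rpos: "0 < r" by (simp add: r_def)
    have cH: "continuous_on (closed_segment r0 r) (\<lambda>s. f (s, y0) * cis y0)"
      using contH[OF cont] seg_pos[OF r0pos rpos] continuous_on_subset by blast
    have cV: "continuous_on (closed_segment y0 y) (\<lambda>t. f (r, t) * cis t * (\<i> * of_real r))"
      by (rule contV[OF cont rpos])
    have e1: "II (\<lambda>s. f (s, y0) * cis y0 - c0 * cis y0) r0 r = PH f r0 r y0 - c0 * cis y0 * of_real (r - r0)"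
      unfolding PH_def by (subst II_diff[OF cH]) (auto simp: II_const)
    have e2: "II (\<lambda>t. f (r, t) * cis t * (\<i> * of_real r) - c0 * cis t * (\<i> * of_real r)) y0 y
        = PV f r y0 y - c0 * (\<i> * of_real r) * (-\<i>) * (cis y - cis y0)"
      unfolding PV_def by (subst II_diff[OF cV]) (auto intro!: continuous_intros simp: II_cis)
    have ii: "c0 * (\<i> * of_real r) * (-\<i>) = c0 * of_real r" by (simp add: algebra_simps)
    have ew: "exp w = of_real r * cis y" "exp w0 = of_real r0 * cis y0"
      by (simp_all add: exp_eq_polar r_def y_def r0_def y0_def)
    have "K w - K w0 = (FF f (r, y) - FF f (r0, y0)) - c0 * (exp w - exp w0)"
      by (simp add: K_def r_def y_def r0_def y0_def algebra_simps)
    also have "FF f (r, y) - FF f (r0, y0) = PH f r0 r y0 + PV f r y0 y"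
      by (rule Fdiff[OF cont hyp r0pos rpos])
    finally have "K w - K w0 = II (\<lambda>s. f (s, y0) * cis y0 - c0 * cis y0) r0 r
      + II (\<lambda>t. f (r, t) * cis t * (\<i> * of_real r) - c0 * cis t * (\<i> * of_real r)) y0 y"
      unfolding e1 e2 ii ew by (simp add: algebra_simps)
    then show ?thesis unfolding r_def y_def .
  qed
  have key: "((\<lambda>w. (K w - K w0) / (w - w0)) \<longlongrightarrow> 0) (at w0)"
  proof (rule tendstoI)
    fix e :: real assume e: "e > 0"
    define \<epsilon> where "\<epsilon> = e / (4 * M)"
    have \<epsilon>pos: "\<epsilon> > 0" using e Mpos by (simp add: \<epsilon>_def)
    obtain \<delta> where \<delta>1: "\<delta> > 0" and \<delta>2: "\<forall>q\<in>polar_H. dist q (r0, y0) < \<delta> \<longrightarrow> dist (f q) c0 < \<epsilon>"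
      using cont p0H \<epsilon>pos unfolding continuous_on_iff c0_def by blast
    define d where "d = min 1 (min (\<delta> / (2 * M)) (\<delta> / 2))"
    have dpos: "d > 0" using \<delta>1 Mpos by (simp add: d_def)
    show "eventually (\<lambda>w. dist ((K w - K w0) / (w - w0)) 0 < e) (at w0)"
      unfolding eventually_at
    proof (intro exI conjI ballI impI)
      show "d > 0" by (rule dpos)
      fix w assume w: "w \<noteq> w0 \<and> dist w w0 < d"
      define r where "r = exp (Re w)"
      define y where "y = Im w"
      have rpos: "0 < r" by (simp add: r_def)
      have nz: "cmod (w - w0) > 0" using w by simp
      have dw: "cmod (w - w0) < d" using w by (simp add: dist_norm)
      have hre: "\<bar>Re w - Re w0\<bar> \<le> cmod (w - w0)" using abs_Re_le_cmod[of "w - w0"] by simp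
      have him: "\<bar>y - y0\<bar> \<le> cmod (w - w0)" unfolding y_def y0_def using abs_Im_le_cmod[of "w - w0"] by simp
      have le1: "\<bar>Re w - Re w0\<bar> \<le> 1" using hre dw by (simp add: d_def)
      have "\<bar>r - r0\<bar> \<le> M * \<bar>Re w - Re w0\<bar>"
        using exp_lip[OF le1] by (simp add: r_def r0_def M_def)
      also have "\<dots> \<le> M * cmod (w - w0)" using hre Mpos by simp
      finally have rr: "\<bar>r - r0\<bar> \<le> M * cmod (w - w0)" .
      have "M * cmod (w - w0) < M * (\<delta> / (2 * M))"
        using dw Mpos by (intro mult_strict_left_mono) (auto simp: d_def)
      then have rr2: "\<bar>r - r0\<bar> < \<delta> / 2" using rr Mpos by simp
      have yy2: "\<bar>y - y0\<bar> < \<delta> / 2" using him dw by (simp add: d_def)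
      have rM: "r \<le> M" using le1 by (simp add: r_def M_def)
      have b1: "norm (II (\<lambda>s. f (s, y0) * cis y0 - c0 * cis y0) r0 r) \<le> \<epsilon> * \<bar>r - r0\<bar>"
      proof (rule II_bound)
        show "continuous_on (closed_segment r0 r) (\<lambda>s. f (s, y0) * cis y0 - c0 * cis y0)"
        proof -
          have "continuous_on (closed_segment r0 r) (\<lambda>s. f (s, y0) * cis y0)"
            using contH[OF cont] seg_pos[OF r0pos rpos] continuous_on_subset by blast
          then show ?thesis by (intro continuous_on_diff continuous_on_const)
        qed
        show "0 \<le> \<epsilon>" using \<epsilon>pos by simp
        fix s assume s: "s \<in> closed_segment r0 r"
        have "0 < s" using seg_pos[OF r0pos rpos] s by auto
        moreover have "\<bar>s - r0\<bar> \<le> \<bar>r - r0\<bar>" using s by (auto simp: closed_segment_eq_real_ivl split: if_splits)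
        moreover have "\<bar>s - r0\<bar> < \<delta>" using calculation rr2 by linarith
        ultimately have "dist (f (s, y0)) c0 < \<epsilon>"
          by (intro \<delta>2[rule_format]) (auto simp: polar_H_def dist_Pair_Pair dist_real_def)
        moreover have "f (s, y0) * cis y0 - c0 * cis y0 = (f (s, y0) - c0) * cis y0"
          by (simp add: left_diff_distrib)
        ultimately show "norm (f (s, y0) * cis y0 - c0 * cis y0) \<le> \<epsilon>"
          by (simp add: dist_norm norm_mult)
      qed
      have b2: "norm (II (\<lambda>t. f (r, t) * cis t * (\<i> * of_real r) - c0 * cis t * (\<i> * of_real r)) y0 y) \<le> (\<epsilon> * r) * \<bar>y - y0\<bar>"
      proof (rule II_bound)
        show "continuous_on (closed_segment y0 y) (\<lambda>t. f (r, t) * cis t * (\<i> * of_real r) - c0 * cis t * (\<i> * of_real r))"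
          by (intro continuous_on_diff contV[OF cont rpos] continuous_on_mult continuous_on_const continuous_on_cis continuous_on_id)
        show "0 \<le> \<epsilon> * r" using \<epsilon>pos rpos by simp
        fix t assume t: "t \<in> closed_segment y0 y"
        have "\<bar>t - y0\<bar> \<le> \<bar>y - y0\<bar>" using t by (auto simp: closed_segment_eq_real_ivl split: if_splits)
        then have "dist (r, t) (r0, y0) < \<delta>"
          using rr2 yy2 sqrt_sum_squares_le_sum_abs[of "r - r0" "t - y0"]
          by (simp add: dist_Pair_Pair dist_real_def)
        then have "dist (f (r, t)) c0 < \<epsilon>" using rpos by (intro \<delta>2[rule_format]) (auto simp: polar_H_def)
        then have "norm (f (r, t) - c0) * r \<le> \<epsilon> * r" using rpos by (simp add: dist_norm)
        moreover have "f (r, t) * cis t * (\<i> * of_real r) - c0 * cis t * (\<i> * of_real r) = (f (r, t) - c0) * (cis t * (\<i> * of_real r))"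
          by (simp add: algebra_simps)
        moreover have "norm ((f (r, t) - c0) * (cis t * (\<i> * of_real r))) = norm (f (r, t) - c0) * r"
          using rpos by (simp add: norm_mult)
        ultimately show "norm (f (r, t) * cis t * (\<i> * of_real r) - c0 * cis t * (\<i> * of_real r)) \<le> \<epsilon> * r" by metis
      qed
      have "norm (K w - K w0) \<le> norm (II (\<lambda>s. f (s, y0) * cis y0 - c0 * cis y0) r0 r)
          + norm (II (\<lambda>t. f (r, t) * cis t * (\<i> * of_real r) - c0 * cis t * (\<i> * of_real r)) y0 y)"
        unfolding E[of w] r_def y_def by (rule norm_triangle_ineq)
      also have "\<dots> \<le> \<epsilon> * \<bar>r - r0\<bar> + (\<epsilon> * r) * \<bar>y - y0\<bar>"
        using b1 b2 by (rule add_mono)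
      also have "\<dots> \<le> \<epsilon> * (M * cmod (w - w0)) + (\<epsilon> * M) * cmod (w - w0)"
        using rr him rM \<epsilon>pos rpos
        by (intro add_mono mult_left_mono mult_mono) auto
      also have "\<dots> = e / 2 * cmod (w - w0)" using Mpos by (simp add: \<epsilon>_def field_simps)
      finally have "norm (K w - K w0) / cmod (w - w0) \<le> e / 2" using nz by (simp add: divide_simps)
      then have "norm (K w - K w0) / cmod (w - w0) < e" using e by linarith
      then show "dist ((K w - K w0) / (w - w0)) 0 < e" by (simp add: dist_norm norm_divide)
    qed
  qed
  then have "(K has_field_derivative 0) (at w0)" by (simp add: has_field_derivative_iff)
  then have "((\<lambda>w. K w + c0 * exp w) has_field_derivative 0 + c0 * exp w0) (at w0)"
    by (auto intro!: derivative_eq_intros)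
  then show ?thesis by (simp add: K_def c0_def r0_def y0_def)
qed



lemma g_holo:
  assumes cont: "continuous_on polar_H f"
    and hyp: "\<And>a b c d. 0 < a \<Longrightarrow> a < b \<Longrightarrow> c < d \<Longrightarrow> polar_rect_boundary_integral f a b c d = 0"
  shows "(\<lambda>w. f (exp (Re w), Im w) * exp w) holomorphic_on UNIV"
proof -
  let ?G = "\<lambda>w. FF f (exp (Re w), Im w)"
  have d: "\<And>w. (?G has_field_derivative f (exp (Re w), Im w) * exp w) (at w)"
    by (rule Gderiv[OF cont hyp])
  have "?G holomorphic_on UNIV"
    using d by (auto simp: holomorphic_on_open)
  then have "deriv ?G holomorphic_on UNIV" by (rule holomorphic_deriv) simp
  moreover have "deriv ?G = (\<lambda>w. f (exp (Re w), Im w) * exp w)"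
    using d by (intro ext DERIV_imp_deriv)
  ultimately show ?thesis by simp
qed

theorem proposition3:
  fixes f :: "real \<times> real \<Rightarrow> complex"
  assumes "continuous_on polar_H f"
    and "\<And>a b c d. 0 < a \<Longrightarrow> a < b \<Longrightarrow> c < d \<Longrightarrow> polar_rect_boundary_integral f a b c d = 0"
  shows "polar_analytic f"
proof -
  define h where "h w = f (exp (Re w), Im w)" for w
  have "(\<lambda>w. (f (exp (Re w), Im w) * exp w) * exp (- w)) holomorphic_on UNIV"
    by (intro holomorphic_intros g_holo[OF assms])
  moreover have "(\<lambda>w. (f (exp (Re w), Im w) * exp w) * exp (- w)) = h"
    by (auto simp: h_def exp_minus_inverse)
  ultimately have hol: "h holomorphic_on UNIV" by simp
  define \<phi> where "\<phi> p = complex_of_real (ln (fst p)) + \<i> * of_real (snd p)" for p :: "real \<times> real"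
  have pt: "polar_pt p = exp (\<phi> p)" if "p \<in> polar_H" for p
    using that by (cases p) (simp add: polar_pt_def polar_H_def \<phi>_def exp_eq_polar)
  have fh: "f p = h (\<phi> p)" if "p \<in> polar_H" for p
    using that by (cases p) (simp add: polar_H_def \<phi>_def h_def)
  show ?thesis unfolding polar_analytic_def
  proof
    fix p0 assume p0: "p0 \<in> polar_H"
    define S where "S = {p \<in> polar_H. polar_pt p \<noteq> polar_pt p0}"
    define w0 where "w0 = \<phi> p0"
    define D where "D = deriv h w0"
    have "h field_differentiable at w0"
      using hol holomorphic_on_imp_differentiable_at by blast
    then have hd: "(h has_field_derivative D) (at w0)"
      unfolding D_def by (simp add: DERIV_deriv_iff_field_differentiable)
    have A: "((\<lambda>w. (h w - h w0) / (w - w0)) \<longlongrightarrow> D) (at w0)"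
      using hd by (simp add: has_field_derivative_iff)
    have B: "((\<lambda>w. (exp w - exp w0) / (w - w0)) \<longlongrightarrow> exp w0) (at w0)"
      using DERIV_exp[of w0] by (simp add: has_field_derivative_iff)
    have Q0: "((\<lambda>w. ((h w - h w0) / (w - w0)) / ((exp w - exp w0) / (w - w0))) \<longlongrightarrow> D / exp w0) (at w0)"
      by (rule tendsto_divide[OF A B]) simp
    have dd: "(a / c) / (b / c) = a / b" if "c \<noteq> 0" for a b c :: complex
      using that by (cases "b = 0") (simp_all add: field_simps)
    have ev: "eventually (\<lambda>w. ((h w - h w0) / (w - w0)) / ((exp w - exp w0) / (w - w0)) = (h w - h w0) / (exp w - exp w0)) (at w0)"
      unfolding eventually_at_filter
      by (rule always_eventually, intro allI impI, rule dd) simp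
    have Q: "((\<lambda>w. (h w - h w0) / (exp w - exp w0)) \<longlongrightarrow> D / exp w0) (at w0)"
      using tendsto_cong[OF ev] Q0 by simp
    have p0': "fst p0 > 0" using p0 by (simp add: polar_H_def)
    have Fl: "filterlim \<phi> (at w0) (at p0 within S)"
      unfolding filterlim_at
    proof
      show "eventually (\<lambda>p. \<phi> p \<in> UNIV \<and> \<phi> p \<noteq> w0) (at p0 within S)"
        unfolding eventually_at_filter
        by (rule always_eventually) (auto simp: S_def w0_def pt p0)
      show "(\<phi> \<longlongrightarrow> w0) (at p0 within S)"
        unfolding w0_def \<phi>_def using p0' by (auto intro!: tendsto_intros)
    qed
    have "((\<lambda>p. (h (\<phi> p) - h w0) / (exp (\<phi> p) - exp w0)) \<longlongrightarrow> D / exp w0) (at p0 within S)"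
      by (rule filterlim_compose[OF Q Fl])
    moreover have "eventually (\<lambda>p. (h (\<phi> p) - h w0) / (exp (\<phi> p) - exp w0) = (f p - f p0) / (polar_pt p - polar_pt p0)) (at p0 within S)"
      unfolding eventually_at_filter
      by (rule always_eventually) (auto simp: S_def w0_def pt fh p0)
    ultimately have "((\<lambda>p. (f p - f p0) / (polar_pt p - polar_pt p0)) \<longlongrightarrow> D / exp w0) (at p0 within S)"
      using tendsto_cong by fastforce
    then show "\<exists>L. ((\<lambda>p. (f p - f p0) / (polar_pt p - polar_pt p0)) \<longlongrightarrow> L)
        (at p0 within {p \<in> polar_H. polar_pt p \<noteq> polar_pt p0})"
      unfolding S_def by blast
  qed
qed


end
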